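(* Let $\kappa$ be a nonzero real constant and $\gamma\in\{1,-1\}$. Let $W(\xi,\eta,\mu)=\sum_{n\ge1}W^{(n)}(\xi,\eta)\,\mu^{-n}$ be the off-diagonal $2\times2$ matrix series appearing in the large-spectral-parameter decomposition of the fundamental solution described in the context, and define the generating function \[ \mathbb Y(\xi,\eta,\lambda;\mu)=\frac{\gamma\kappa}{2i(\lambda-\mu)}\,(\mathbb 1+W(\xi,\eta,\mu))\,\sigma_3\,(\mathbb 1+W(\xi,\eta,\mu))^{-1}, \] with matrices $\mathbb Y^{(n)}(\xi,\eta,\lambda)$, $n\ge0$, defined by the large-$\mu$ expansion $\mathbb Y(\xi,\eta,\lambda;\mu)=\kappa\sum_{n=1}^\infty \mathbb Y^{(n-1)}(\xi,\eta,\lambda)\,\mu^{-n}$. Then \[ \mathbb Y^{(0)}(\xi,\eta,\lambda)=\frac{i\gamma}{2}\sigma_3, \] and for all $n\ge1$, \[ \mathbb Y^{(n)}(\xi,\eta,\lambda)=\lambda\,\mathbb Y^{(n-1)}(\xi,\eta,\lambda)+i\gamma\,\sigma_3\sum_{j=1}^n(-1)^j\sum_{\substack{m_1+\dots+m_j=n\\ m_1,\dots,m_j\ge1}}W^{(m_1)}\cdots W^{(m_j)}, \] where the inner sum runs over all ordered decompositions of $n$ into $j$ positive integers.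
   Context: Setting: $\mathbb X(\xi,\eta,\lambda)$ is a $2\times2$ matrix that is a polynomial of degree $N$ in the spectral parameter $\lambda$, with $\mathrm{Tr}\,\mathbb X=0$ and $\overline{\mathbb X(\xi,\eta,\bar\lambda)}=\sigma\,\mathbb X(\xi,\eta,\lambda)\,\sigma$, where $\sigma=\sigma_1$ if $\kappa>0$ and $\sigma=\sigma_2$ if $\kappa<0$; $\sigma_1,\sigma_2,\sigma_3$ are the Pauli matrices. Periodic boundary conditions are imposed in $\xi\in[-\Lambda,\Lambda]$. Let $\mathbb T(\xi,\zeta,\lambda)$ be the fundamental solution of $\partial_\xi\Psi=\mathbb X\Psi$ normalized by $\mathbb T(\xi,\xi,\lambda)=\mathbb 1$. For large $\lambda$ it is written as $\mathbb T(\xi,\zeta,\lambda)=(\mathbb 1+W(\xi,\lambda))e^{Z(\xi,\zeta,\lambda)}(\mathbb 1+W(\zeta,\lambda))^{-1}$ with $W$ off-diagonal, $W(\xi,\lambda)=\sum_{n\ge1}W^{(n)}(\xi)\lambda^{-n}$, and $Z$ diagonal; the coefficients $W^{(n)}$ (which also depend on the second variable $\eta$) are determined by the matrix Riccati equation $W_\xi=\mathbb X_dW-W\mathbb X_d+\mathbb X_o-W\mathbb X_oW$, where $\mathbb X_d$, $\mathbb X_o$ are the diagonal and off-diagonal parts of $\mathbb X$. Expansions in $\mu$ are understood as formal large-$\mu$ expansions. *)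

theory Defs
  imports "HOL-Analysis.Analysis" "HOL-Computational_Algebra.Formal_Power_Series"
begin

text \<open>2x2 complex matrices are complex^2^2 (rows indexed by 1,2).
 Formal series in the large parameter mu are formal power series in x = 1/mu.\<close>

definition sigma3 :: "complex^2^2" where
  "sigma3 = vector [vector [1, 0], vector [0, -1]]"

definition off_diagonal :: "complex^2^2 \<Rightarrow> bool" where
  "off_diagonal A \<longleftrightarrow> (\<forall>i. A $ i $ i = 0)"

definition cscale :: "complex \<Rightarrow> complex^2^2 \<Rightarrow> complex^2^2" where
  "cscale c A = (\<chi> i j. c * A $ i $ j)"

definition lift_mat :: "complex^2^2 \<Rightarrow> complex fps^2^2" where
  "lift_mat A = (\<chi> i j. fps_const (A $ i $ j))"

text \<open>W(mu) = sum_{n>=1} W^(n) mu^(-n), as matrix of fps in x = 1/mu (coefficient W 0 is ignored)\<close>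
definition W_ser :: "(nat \<Rightarrow> complex^2^2) \<Rightarrow> complex fps^2^2" where
  "W_ser W = (\<chi> i j. Abs_fps (\<lambda>n. if n = 0 then 0 else W n $ i $ j))"

text \<open>Generating function Y = gamma kappa / (2 i (lambda - mu)) (1+W) sigma3 (1+W)^{-1},
  using 1/(lambda - mu) = - x / (1 - lambda x) with x = 1/mu.\<close>
definition Y_gen :: "real \<Rightarrow> real \<Rightarrow> complex \<Rightarrow> (nat \<Rightarrow> complex^2^2) \<Rightarrow> complex fps^2^2" where
  "Y_gen \<kappa> \<gamma> lam W =
     (let M = (mat 1 + W_ser W) ** lift_mat sigma3 ** matrix_inv (mat 1 + W_ser W)
      in (\<chi> i j. fps_const (complex_of_real (\<gamma> * \<kappa>) / (2 * \<i>))
                 * (- fps_X * inverse (1 - fps_const lam * fps_X)) * M $ i $ j))"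

text \<open>Y^(n): Y = kappa * sum_{n>=1} Y^(n-1) mu^(-n)\<close>
definition Y_coef :: "real \<Rightarrow> real \<Rightarrow> complex \<Rightarrow> (nat \<Rightarrow> complex^2^2) \<Rightarrow> nat \<Rightarrow> complex^2^2" where
  "Y_coef \<kappa> \<gamma> lam W n =
     (\<chi> i j. fps_nth (Y_gen \<kappa> \<gamma> lam W $ i $ j) (Suc n) / complex_of_real \<kappa>)"

definition compositions :: "nat \<Rightarrow> nat \<Rightarrow> nat list set" where
  "compositions n j = {ms. length ms = j \<and> (\<forall>m\<in>set ms. 1 \<le> m) \<and> sum_list ms = n}"

definition Wprod :: "(nat \<Rightarrow> complex^2^2) \<Rightarrow> nat list \<Rightarrow> complex^2^2" where
  "Wprod W ms = foldr (\<lambda>m A. W m ** A) ms (mat 1)"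

end

theory Submission
  imports Defs
begin

lemma inv2_scalar:
  fixes a b c d e f g h :: "'a::comm_ring_1"
  assumes h11: "a*e + b*g = 1" and h12: "a*f + b*h = 0" and h21: "c*e + d*g = 0" and h22: "c*f+d*h = 1"
  shows "e*a + f*c = 1 \<and> e*b + f*d = 0 \<and> g*a + h*c = 0 \<and> g*b + h*d = 1"
proof -
  define D where "D = a*d - b*c"
  define E where "E = e*h - f*g"
  have DE: "D*E = 1"
  proof -
    have "D*E = (a*e+b*g)*(c*f+d*h) - (a*f+b*h)*(c*e+d*g)" unfolding D_def E_def by (simp add: algebra_simps)
    then show ?thesis using assms by simp
  qed
  have De: "D*e = d"
  proof -
    have "D*e = d*(a*e+b*g) - b*(c*e+d*g)" unfolding D_def by (simp add: algebra_simps)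
    then show ?thesis using assms by simp
  qed
  have Df: "D*f = -b"
  proof -
    have "D*f = d*(a*f+b*h) - b*(c*f+d*h)" unfolding D_def by (simp add: algebra_simps)
    then show ?thesis using assms by simp
  qed
  have Dg: "D*g = -c"
  proof -
    have "D*g = a*(c*e+d*g) - c*(a*e+b*g)" unfolding D_def by (simp add: algebra_simps)
    then show ?thesis using assms by simp
  qed
  have Dh: "D*h = a"
  proof -
    have "D*h = a*(c*f+d*h) - c*(a*f+b*h)" unfolding D_def by (simp add: algebra_simps)
    then show ?thesis using assms by simp
  qed
  have "e*a + f*c = (D*E)*(e*a + f*c)" using DE by simp
  also have "\<dots> = E*((D*e)*a + (D*f)*c)" by (simp add: algebra_simps)
  also have "\<dots> = E*(a*d - b*c)" unfolding De Df by (simp add: algebra_simps)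
  also have "\<dots> = E*D" unfolding D_def ..
  finally have 1: "e*a + f*c = 1" using DE by (simp add: mult.commute)
  have "e*b + f*d = (D*E)*(e*b + f*d)" using DE by simp
  also have "\<dots> = E*((D*e)*b + (D*f)*d)" by (simp add: algebra_simps)
  also have "\<dots> = 0" unfolding De Df by (simp add: algebra_simps)
  finally have 2: "e*b + f*d = 0" .
  have "g*a + h*c = (D*E)*(g*a + h*c)" using DE by simp
  also have "\<dots> = E*((D*g)*a + (D*h)*c)" by (simp add: algebra_simps)
  also have "\<dots> = 0" unfolding Dg Dh by (simp add: algebra_simps)
  finally have 3: "g*a + h*c = 0" .
  have "g*b + h*d = (D*E)*(g*b + h*d)" using DE by simp
  also have "\<dots> = E*((D*g)*b + (D*h)*d)" by (simp add: algebra_simps)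
  also have "\<dots> = E*(a*d - b*c)" unfolding Dg Dh by (simp add: algebra_simps)
  also have "\<dots> = E*D" unfolding D_def ..
  finally have 4: "g*b + h*d = 1" using DE by (simp add: mult.commute)
  show ?thesis using 1 2 3 4 by blast
qed

lemma inv2:
  fixes A B :: "'a::comm_ring_1^2^2"
  assumes "A ** B = mat 1" shows "B ** A = mat 1"
proof -
  have e: "\<And>i j. (A ** B) $ i $ j = (if i = j then 1 else 0)" using assms by (simp add: mat_def)
  have h11: "A$1$1*B$1$1 + A$1$2*B$2$1 = 1" using e[of 1 1] by (simp add: matrix_matrix_mult_def sum_2)
  have h12: "A$1$1*B$1$2 + A$1$2*B$2$2 = 0" using e[of 1 2] by (simp add: matrix_matrix_mult_def sum_2)
  have h21: "A$2$1*B$1$1 + A$2$2*B$2$1 = 0" using e[of 2 1] by (simp add: matrix_matrix_mult_def sum_2)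
  have h22: "A$2$1*B$1$2 + A$2$2*B$2$2 = 1" using e[of 2 2] by (simp add: matrix_matrix_mult_def sum_2)
  note g = inv2_scalar[OF h11 h12 h21 h22]
  show ?thesis
    using g by (simp add: vec_eq_iff forall_2 matrix_matrix_mult_def sum_2 mat_def)
qed


lemma mm_sum_right: "(A::'a::comm_semiring_1^'n^'m) ** sum f S = sum (\<lambda>x. A ** f x) S"
  by (cases "finite S", induction S rule: finite_induct) (auto simp: matrix_add_ldistrib)

lemma mm_neg_right: "(A::'a::comm_ring_1^'n^'m) ** (- B) = - (A ** B)"
  by (simp add: vec_eq_iff matrix_matrix_mult_def sum_negf)

lemma cscale_add: "cscale c (A + B) = cscale c A + cscale c B"
  by (simp add: cscale_def vec_eq_iff algebra_simps)
lemma cscale_0 [simp]: "cscale c 0 = 0" by (simp add: cscale_def vec_eq_iff)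
lemma cscale_sum: "cscale c (sum f S) = sum (\<lambda>x. cscale c (f x)) S"
  by (cases "finite S", induction S rule: finite_induct) (auto simp: cscale_add)
lemma cscale_one [simp]: "cscale 1 A = A" by (simp add: cscale_def vec_eq_iff)
lemma cscale_neg: "cscale (- c) A = - cscale c A" by (simp add: cscale_def vec_eq_iff)
lemma mm_cscale_right: "A ** cscale c B = cscale c (A ** B)"
  by (simp add: cscale_def vec_eq_iff matrix_matrix_mult_def sum_distrib_left algebra_simps)
lemma mm_cscale_left: "cscale c A ** B = cscale c (A ** B)"
  by (simp add: cscale_def vec_eq_iff matrix_matrix_mult_def sum_distrib_left algebra_simps)

lemma finite_compositions: "finite (compositions n j)"
proof -
  have "compositions n j \<subseteq> {ms. set ms \<subseteq> {0..n} \<and> length ms = j}"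
    unfolding compositions_def
    by (auto simp: member_le_sum_list)
  moreover have "finite {ms. set ms \<subseteq> {0..n} \<and> length ms = j}"
    by (rule finite_lists_length_eq) simp
  ultimately show ?thesis by (rule finite_subset)
qed

lemma compositions_0_0: "compositions 0 0 = {[]}"
  by (auto simp: compositions_def)
lemma compositions_pos_0: "k > 0 \<Longrightarrow> compositions k 0 = {}"
  by (auto simp: compositions_def)
lemma length_le_sum_list: "\<forall>m\<in>set ms. (1::nat) \<le> m \<Longrightarrow> length ms \<le> sum_list ms"
  by (induction ms) auto
lemma compositions_big: "l > k \<Longrightarrow> compositions k l = {}"
  using length_le_sum_list by (fastforce simp: compositions_def)

lemma compositions_Suc:
  "compositions n (Suc l) = (\<Union>m\<in>{1..n}. (\<lambda>r. m # r) ` compositions (n - m) l)"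
proof (rule set_eqI, rule iffI)
  fix ms assume "ms \<in> compositions n (Suc l)"
  then obtain m r where ms: "ms = m # r" and m: "1 \<le> m" and r: "\<forall>x\<in>set r. 1 \<le> x"
    and len: "length r = l" and s: "m + sum_list r = n"
    unfolding compositions_def by (cases ms) auto
  then have "r \<in> compositions (n - m) l" unfolding compositions_def by auto
  moreover have "m \<in> {1..n}" using m s by auto
  ultimately show "ms \<in> (\<Union>m\<in>{1..n}. (\<lambda>r. m # r) ` compositions (n - m) l)" using ms by blast
next
  fix ms assume "ms \<in> (\<Union>m\<in>{1..n}. (\<lambda>r. m # r) ` compositions (n - m) l)"
  then show "ms \<in> compositions n (Suc l)" unfolding compositions_def by auto
qed

definition Csum :: "(nat \<Rightarrow> complex^2^2) \<Rightarrow> nat \<Rightarrow> nat \<Rightarrow> complex^2^2" where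
  "Csum W k l = (\<Sum>ms\<in>compositions k l. Wprod W ms)"

lemma Csum_Suc: "Csum W n (Suc l) = (\<Sum>m=1..n. W m ** Csum W (n - m) l)"
proof -
  have "Csum W n (Suc l) = (\<Sum>m\<in>{1..n}. \<Sum>ms\<in>(\<lambda>r. m # r) ` compositions (n - m) l. Wprod W ms)"
    unfolding Csum_def compositions_Suc
    by (rule sum.UNION_disjoint) (auto simp: finite_compositions)
  also have "\<dots> = (\<Sum>m=1..n. \<Sum>r\<in>compositions (n - m) l. W m ** Wprod W r)"
    by (rule sum.cong[OF refl], subst sum.reindex) (auto simp: Wprod_def)
  also have "\<dots> = (\<Sum>m=1..n. W m ** Csum W (n - m) l)"
    by (simp add: Csum_def mm_sum_right)
  finally show ?thesis .
qed

lemma Csum_0_0: "Csum W 0 0 = mat 1" by (simp add: Csum_def compositions_0_0 Wprod_def)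
lemma Csum_pos_0: "k > 0 \<Longrightarrow> Csum W k 0 = 0" by (simp add: Csum_def compositions_pos_0)
lemma Csum_big: "l > k \<Longrightarrow> Csum W k l = 0" by (simp add: Csum_def compositions_big)

definition Qm :: "(nat \<Rightarrow> complex^2^2) \<Rightarrow> nat \<Rightarrow> complex^2^2" where
  "Qm W k = (\<Sum>j=0..k. cscale ((-1)^j) (Csum W k j))"

lemma Qm_bound: "k \<le> N \<Longrightarrow> (\<Sum>j=0..N. cscale ((-1)^j) (Csum W k j)) = Qm W k"
  unfolding Qm_def by (rule sum.mono_neutral_right) (auto simp: Csum_big)

lemma Qm_0: "Qm W 0 = mat 1" by (simp add: Qm_def Csum_0_0)

lemma Qm_pos: "n \<ge> 1 \<Longrightarrow> Qm W n = (\<Sum>j=1..n. cscale ((-1) ^ j) (\<Sum>ms\<in>compositions n j. Wprod W ms))"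
  unfolding Qm_def
  by (subst sum.atLeast_Suc_atMost) (auto simp: Csum_pos_0 Csum_def compositions_pos_0)

lemma Qm_rec: assumes "n \<ge> 1" shows "Qm W n + (\<Sum>m=1..n. W m ** Qm W (n - m)) = 0"
proof -
  obtain p where n: "n = Suc p" using assms by (cases n) auto
  have "Qm W n = (\<Sum>l=0..p. cscale ((-1)^(Suc l)) (Csum W n (Suc l)))"
  proof -
    let ?f = "\<lambda>j. cscale ((-1)^j) (Csum W n j)"
    have "Qm W n = ?f 0 + (\<Sum>j=Suc 0..Suc p. ?f j)"
      unfolding Qm_def n by (rule sum.atLeast_Suc_atMost) simp
    also have "(\<Sum>j=Suc 0..Suc p. ?f j) = (\<Sum>l=0..p. ?f (Suc l))"
      by (rule sum.shift_bounds_cl_Suc_ivl)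
    finally show ?thesis using Csum_pos_0[of n W] n by simp
  qed
  also have "\<dots> = - (\<Sum>l=0..p. \<Sum>m=1..n. W m ** cscale ((-1)^l) (Csum W (n - m) l))"
    by (simp add: Csum_Suc cscale_sum cscale_neg mm_cscale_right sum_negf)
  also have "\<dots> = - (\<Sum>m=1..n. W m ** (\<Sum>l=0..p. cscale ((-1)^l) (Csum W (n - m) l)))"
    by (subst sum.swap) (simp add: mm_sum_right)
  also have "\<dots> = - (\<Sum>m=1..n. W m ** Qm W (n - m))"
    by (rule arg_cong[where f=uminus], rule sum.cong[OF refl]) (subst Qm_bound, auto simp: n)
  finally show ?thesis by simp
qed



definition coefm :: "complex fps^2^2 \<Rightarrow> nat \<Rightarrow> complex^2^2" where
  "coefm F n = (\<chi> i j. fps_nth (F $ i $ j) n)"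

lemma coefm_inject: "(\<And>n. coefm F n = coefm G n) \<Longrightarrow> F = G"
  by (simp add: coefm_def vec_eq_iff fps_eq_iff)

lemma coefm_mult: "coefm (F ** G) n = (\<Sum>t=0..n. coefm F t ** coefm G (n - t))"
proof -
  have "\<And>i j. (\<Sum>k\<in>UNIV. \<Sum>t=0..n. fps_nth (F$i$k) t * fps_nth (G$k$j) (n-t)) = (\<Sum>t=0..n. \<Sum>k\<in>UNIV. fps_nth (F$i$k) t * fps_nth (G$k$j) (n-t))"
    by (rule sum.swap)
  then show ?thesis
    by (simp add: coefm_def vec_eq_iff matrix_matrix_mult_def fps_sum_nth fps_mult_nth)
qed

lemma coefm_add: "coefm (F + G) n = coefm F n + coefm G n"
  by (simp add: coefm_def vec_eq_iff)
lemma coefm_diff: "coefm (F - G) n = coefm F n - coefm G n"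
  by (simp add: coefm_def vec_eq_iff)
lemma coefm_mat1: "coefm (mat 1) n = (if n = 0 then mat 1 else 0)"
  by (simp add: coefm_def vec_eq_iff mat_def)
lemma coefm_Wser: "coefm (W_ser W) n = (if n = 0 then 0 else W n)"
  by (simp add: coefm_def vec_eq_iff W_ser_def)
lemma coefm_lift_left: "coefm (lift_mat A ** F) n = A ** coefm F n"
  by (simp add: coefm_def vec_eq_iff matrix_matrix_mult_def lift_mat_def fps_sum_nth)

lemma mm_diff_left: "((B::'a::comm_ring_1^'n^'m) - C) ** D = B ** D - C ** D"
  by (simp add: vec_eq_iff matrix_matrix_mult_def sum_subtractf algebra_simps)
lemma mm_add_left: "((B::'a::comm_ring_1^'n^'m) + C) ** D = B ** D + C ** D"
  by (simp add: vec_eq_iff matrix_matrix_mult_def sum.distrib algebra_simps)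

lemma sigma3_entries: "sigma3$1$1 = 1" "sigma3$1$2 = 0" "sigma3$2$1 = 0" "sigma3$2$2 = -1"
  by (simp_all add: sigma3_def)

lemma main_fps:
  fixes W :: "nat \<Rightarrow> complex^2^2"
  assumes offd: "\<And>n. 1 \<le> n \<Longrightarrow> off_diagonal (W n)"
  defines "A \<equiv> mat 1 + W_ser W"
  defines "N \<equiv> (\<chi> i j. Abs_fps (\<lambda>n. Qm W n $ i $ j)) :: complex fps^2^2"
  shows "coefm (A ** lift_mat sigma3 ** matrix_inv A) n = sigma3 ** (Qm W n + Qm W n - (if n = 0 then mat 1 else 0))"
proof -
  have cN: "coefm N k = Qm W k" for k by (simp add: N_def coefm_def vec_eq_iff)
  have cA: "coefm A t = (if t = 0 then mat 1 else W t)" for t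
    by (simp add: A_def coefm_add coefm_mat1 coefm_Wser)
  have AN: "A ** N = mat 1"
  proof (rule coefm_inject)
    fix n
    show "coefm (A ** N) n = coefm (mat 1) n"
    proof (cases "n = 0")
      case True then show ?thesis by (simp add: coefm_mult cA cN Qm_0 coefm_mat1)
    next
      case False
      have "coefm (A ** N) n = coefm A 0 ** coefm N (n - 0) + (\<Sum>t=Suc 0..n. coefm A t ** coefm N (n - t))"
        unfolding coefm_mult by (rule sum.atLeast_Suc_atMost) simp
      also have "\<dots> = Qm W n + (\<Sum>t=1..n. W t ** Qm W (n - t))"
        by (simp add: cA cN)
      also have "\<dots> = 0" using Qm_rec[of n W] False by simp
      finally show ?thesis using False by (simp add: coefm_mat1)
    qed
  qed
  have NA: "N ** A = mat 1" using inv2[OF AN] .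
  have inv: "matrix_inv A = N"
    unfolding matrix_inv_def
  proof (rule some_equality)
    show "A ** N = mat 1 \<and> N ** A = mat 1" using AN NA by simp
  next
    fix B assume "A ** B = mat 1 \<and> B ** A = mat 1"
    then have "B = (N ** A) ** B" using NA by simp
    also have "\<dots> = N" using \<open>A ** B = mat 1 \<and> B ** A = mat 1\<close> by (simp flip: matrix_mul_assoc)
    finally show "B = N" .
  qed
  have diag: "W_ser W $ i $ i = 0" for i
    using offd by (auto simp: W_ser_def fps_eq_iff off_diagonal_def)
  have m1: "fps_const (-1::complex) = -1" by (simp add: fps_eq_iff)
  have anti: "A ** lift_mat sigma3 = lift_mat sigma3 ** (mat 1 - W_ser W)"
    using diag[of 1] diag[of 2] m1
    by (simp add: A_def vec_eq_iff forall_2 matrix_matrix_mult_def sum_2 lift_mat_def mat_def sigma3_entries m1 del: fps_const_neg)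
  have WN: "W_ser W ** N = mat 1 - N"
  proof -
    have "N + W_ser W ** N = mat 1" using AN by (simp add: A_def mm_add_left)
    then show ?thesis by (simp add: algebra_simps flip: \<open>N + W_ser W ** N = mat 1\<close>)
  qed
  have "A ** lift_mat sigma3 ** matrix_inv A = lift_mat sigma3 ** ((mat 1 - W_ser W) ** N)"
    by (simp add: inv anti matrix_mul_assoc)
  also have "(mat 1 - W_ser W) ** N = N + N - mat 1"
    by (simp add: mm_diff_left WN)
  finally have "A ** lift_mat sigma3 ** matrix_inv A = lift_mat sigma3 ** (N + N - mat 1)" .
  then show ?thesis
    by (simp only: coefm_lift_left coefm_add coefm_diff coefm_mat1 cN)
qed



lemma geo:
  fixes f :: "complex fps"
  shows "inverse (1 - fps_const lam * fps_X) * f = f + fps_const lam * (fps_X * (inverse (1 - fps_const lam * fps_X) * f))"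
proof -
  let ?G = "inverse (1 - fps_const lam * fps_X)"
  have "(1 - fps_const lam * fps_X) * ?G = 1"
    by (rule inverse_mult_eq_1') simp
  then have "?G = 1 + fps_const lam * fps_X * ?G" by (simp add: algebra_simps)
  then have "?G * f = (1 + fps_const lam * fps_X * ?G) * f" by (rule arg_cong[where f="\<lambda>x. x * f"])
  also have "\<dots> = f + fps_const lam * (fps_X * (?G * f))" by (simp only: distrib_right mult_1_left mult.assoc)
  finally show ?thesis .
qed

lemma geo_nth0: "fps_nth (inverse (1 - fps_const lam * fps_X) * f) 0 = fps_nth (f::complex fps) 0"
  by (subst geo) simp
lemma geo_nthS: "fps_nth (inverse (1 - fps_const lam * fps_X) * f) (Suc n)
   = fps_nth (f::complex fps) (Suc n) + lam * fps_nth (inverse (1 - fps_const lam * fps_X) * f) n"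
  by (subst geo) simp

lemma scal: "(k::real) \<noteq> 0 \<Longrightarrow> - (complex_of_real (g * k) / (2 * \<i>)) * x / complex_of_real k = \<i> * complex_of_real g / 2 * x"
  by (simp add: field_simps)

lemma two_entry: "((2::complex^2^2) * A) $ i $ j = 2 * A $ i $ j"
proof -
  have "(2::complex^2^2) * A = A + A" by (rule mult_2)
  then show ?thesis by simp
qed

theorem mainTheorem2:
  fixes \<kappa> \<gamma> :: real and W :: "real \<Rightarrow> real \<Rightarrow> nat \<Rightarrow> complex^2^2"
  assumes "\<kappa> \<noteq> 0"
    and "\<gamma> = 1 \<or> \<gamma> = -1"
    and "\<And>\<xi> \<eta> n. 1 \<le> n \<Longrightarrow> off_diagonal (W \<xi> \<eta> n)"
  shows "\<forall>\<xi> \<eta> (lam::complex).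
      Y_coef \<kappa> \<gamma> lam (W \<xi> \<eta>) 0 = cscale (\<i> * complex_of_real \<gamma> / 2) sigma3
    \<and> (\<forall>n\<ge>1. Y_coef \<kappa> \<gamma> lam (W \<xi> \<eta>) n
          = cscale lam (Y_coef \<kappa> \<gamma> lam (W \<xi> \<eta>) (n - 1))
            + cscale (\<i> * complex_of_real \<gamma>)
                (sigma3 ** (\<Sum>j = 1..n. cscale ((-1) ^ j)
                   (\<Sum>ms\<in>compositions n j. Wprod (W \<xi> \<eta>) ms))))"
proof (intro allI)
  fix \<xi> \<eta> :: real and lam :: complex
  define V where "V = W \<xi> \<eta>"
  have offd: "\<And>n. 1 \<le> n \<Longrightarrow> off_diagonal (V n)" using assms(3) by (simp add: V_def)
  define M where "M = (mat 1 + W_ser V) ** lift_mat sigma3 ** matrix_inv (mat 1 + W_ser V)"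
  define G where "G = inverse (1 - fps_const lam * fps_X)"
  define gm where "gm n = (\<chi> i j. fps_nth (G * M$i$j) n)" for n
  have cM: "coefm M n = sigma3 ** (Qm V n + Qm V n - (if n = 0 then mat 1 else 0))" for n
    unfolding M_def by (rule main_fps[OF offd])
  have gm0: "gm 0 = coefm M 0"
    by (simp add: gm_def coefm_def vec_eq_iff G_def geo_nth0)
  have gmS: "gm (Suc n) = coefm M (Suc n) + cscale lam (gm n)" for n
    by (simp add: gm_def coefm_def vec_eq_iff G_def geo_nthS cscale_def)
  have Yc: "Y_coef \<kappa> \<gamma> lam V n = cscale (\<i> * complex_of_real \<gamma> / 2) (gm n)" for n
  proof -
    have "fps_nth (Y_gen \<kappa> \<gamma> lam V $ i $ j) (Suc n)
        = - (complex_of_real (\<gamma> * \<kappa>) / (2 * \<i>)) * fps_nth (G * M$i$j) n" for i j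
    proof -
      have "Y_gen \<kappa> \<gamma> lam V $ i $ j = - (fps_const (complex_of_real (\<gamma> * \<kappa>) / (2 * \<i>)) * (fps_X * (G * M$i$j)))"
        unfolding Y_gen_def Let_def M_def G_def by (simp add: algebra_simps)
      then show ?thesis by simp
    qed
    then show ?thesis
      using scal[OF assms(1)] assms(1)
      by (simp add: Y_coef_def cscale_def gm_def vec_eq_iff)
  qed
  have Q0: "Qm V 0 + Qm V 0 - mat 1 = mat 1" by (simp add: Qm_0)
  show "Y_coef \<kappa> \<gamma> lam (W \<xi> \<eta>) 0 = cscale (\<i> * complex_of_real \<gamma> / 2) sigma3
    \<and> (\<forall>n\<ge>1. Y_coef \<kappa> \<gamma> lam (W \<xi> \<eta>) n
          = cscale lam (Y_coef \<kappa> \<gamma> lam (W \<xi> \<eta>) (n - 1))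
            + cscale (\<i> * complex_of_real \<gamma>)
                (sigma3 ** (\<Sum>j = 1..n. cscale ((-1) ^ j)
                   (\<Sum>ms\<in>compositions n j. Wprod (W \<xi> \<eta>) ms))))"
    unfolding V_def[symmetric]
  proof (intro conjI allI impI)
    show "Y_coef \<kappa> \<gamma> lam V 0 = cscale (\<i> * complex_of_real \<gamma> / 2) sigma3"
      by (simp only: Yc gm0 cM Q0 simp_thms if_True matrix_mul_rid)
  next
    fix n :: nat assume n: "1 \<le> n"
    then obtain p where np: "n = Suc p" by (cases n) auto
    have z: "(if n = 0 then mat 1 else 0) = (0::complex^2^2)" using np by simp
    have cMn: "coefm M n = sigma3 ** Qm V n + sigma3 ** Qm V n"
      using cM[of n] by (simp only: z diff_zero matrix_add_ldistrib)
    have gmn: "gm n = coefm M n + cscale lam (gm p)" using gmS[of p] np by simp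
    have "Y_coef \<kappa> \<gamma> lam V n = cscale (\<i> * complex_of_real \<gamma> / 2)
            (sigma3 ** Qm V n + sigma3 ** Qm V n + cscale lam (gm p))"
      by (simp only: Yc gmn cMn)
    also have "\<dots> = cscale lam (Y_coef \<kappa> \<gamma> lam V (n - 1)) + cscale (\<i> * complex_of_real \<gamma>) (sigma3 ** Qm V n)"
      by (simp add: Yc np two_entry cscale_def vec_eq_iff ring_distribs)
    finally show "Y_coef \<kappa> \<gamma> lam V n = cscale lam (Y_coef \<kappa> \<gamma> lam V (n - 1))
            + cscale (\<i> * complex_of_real \<gamma>)
                (sigma3 ** (\<Sum>j = 1..n. cscale ((-1) ^ j)
                   (\<Sum>ms\<in>compositions n j. Wprod V ms)))"
      using Qm_pos[OF n, of V] by simp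
  qed
qed


end
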